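(* For any dimension $d>0$ and $\delta>0$, there exists a ReLU neural network $\mathcal N:\mathbb{R}^d \to \mathbb{R}^d$ with 2 hidden layers, width $4d^2$, and magnitudes of weights at most $\frac{1}{\delta}$, that sorts (outputs the entries in ascending order) any input $\mathbf{x} \in \mathcal S^{d}_{\delta}$ all of whose entries are non-zero. For general input $\mathbf{x}\in\mathbb{R}^d$, every output value is bounded in magnitude by $d \|\mathbf{x}\|_{\infty}$.
   Context: $\mathcal S^d_\delta$ is the set of vectors $\mathbf{x}\in\mathbb{R}^d$ whose non-zero entries all lie in $[\delta,1-\delta]$ and are pairwise at distance at least $\delta$ (i.e. $|x_i-x_j|\ge\delta$ for all $i\ne j$ with $x_i,x_j$ non-zero). A ReLU network applies $[z]_+=\max\{0,z\}$ after each affine hidden map, with an affine output layer; width is the number of neurons in the largest hidden layer. *)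

theory Defs
  imports Main "HOL.Real"
begin

(* Vectors in R^n are represented as functions nat => real, only indices < n matter.
   A matrix with m rows and n columns is nat => nat => real, entries W i j with i<m, j<n. *)

definition relu :: "real \<Rightarrow> real" where
  "relu z = max 0 z"

definition affine :: "nat \<Rightarrow> (nat \<Rightarrow> nat \<Rightarrow> real) \<Rightarrow> (nat \<Rightarrow> real) \<Rightarrow> (nat \<Rightarrow> real) \<Rightarrow> (nat \<Rightarrow> real)" where
  "affine n W b x = (\<lambda>i. (\<Sum>j<n. W i j * x j) + b i)"

definition relu_layer :: "nat \<Rightarrow> (nat \<Rightarrow> nat \<Rightarrow> real) \<Rightarrow> (nat \<Rightarrow> real) \<Rightarrow> (nat \<Rightarrow> real) \<Rightarrow> (nat \<Rightarrow> real)" where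
  "relu_layer n W b x = (\<lambda>i. relu (affine n W b x i))"

definition relu_net2 ::
  "nat \<Rightarrow> nat \<Rightarrow> nat \<Rightarrow> (nat \<Rightarrow> nat \<Rightarrow> real) \<Rightarrow> (nat \<Rightarrow> real) \<Rightarrow>
   (nat \<Rightarrow> nat \<Rightarrow> real) \<Rightarrow> (nat \<Rightarrow> real) \<Rightarrow> (nat \<Rightarrow> nat \<Rightarrow> real) \<Rightarrow> (nat \<Rightarrow> real) \<Rightarrow>
   (nat \<Rightarrow> real) \<Rightarrow> (nat \<Rightarrow> real)" where
  "relu_net2 d n1 n2 W1 b1 W2 b2 W3 b3 x =
     affine n2 W3 b3 (relu_layer n1 W2 b2 (relu_layer d W1 b1 x))"

definition params_bounded ::
  "real \<Rightarrow> nat \<Rightarrow> nat \<Rightarrow> nat \<Rightarrow> nat \<Rightarrow> (nat \<Rightarrow> nat \<Rightarrow> real) \<Rightarrow> (nat \<Rightarrow> real) \<Rightarrow>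
   (nat \<Rightarrow> nat \<Rightarrow> real) \<Rightarrow> (nat \<Rightarrow> real) \<Rightarrow> (nat \<Rightarrow> nat \<Rightarrow> real) \<Rightarrow> (nat \<Rightarrow> real) \<Rightarrow> bool" where
  "params_bounded c d n1 n2 dout W1 b1 W2 b2 W3 b3 \<longleftrightarrow>
     (\<forall>i<n1. \<forall>j<d. \<bar>W1 i j\<bar> \<le> c) \<and> (\<forall>i<n1. \<bar>b1 i\<bar> \<le> c) \<and>
     (\<forall>i<n2. \<forall>j<n1. \<bar>W2 i j\<bar> \<le> c) \<and> (\<forall>i<n2. \<bar>b2 i\<bar> \<le> c) \<and>
     (\<forall>i<dout. \<forall>j<n2. \<bar>W3 i j\<bar> \<le> c) \<and> (\<forall>i<dout. \<bar>b3 i\<bar> \<le> c)"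

definition in_S :: "nat \<Rightarrow> real \<Rightarrow> (nat \<Rightarrow> real) \<Rightarrow> bool" where
  "in_S d \<delta> x \<longleftrightarrow>
     (\<forall>i<d. x i \<noteq> 0 \<longrightarrow> \<delta> \<le> x i \<and> x i \<le> 1 - \<delta>) \<and>
     (\<forall>i<d. \<forall>j<d. i \<noteq> j \<and> x i \<noteq> 0 \<and> x j \<noteq> 0 \<longrightarrow> \<delta> \<le> \<bar>x i - x j\<bar>)"

definition sorts_to :: "nat \<Rightarrow> (nat \<Rightarrow> real) \<Rightarrow> (nat \<Rightarrow> real) \<Rightarrow> bool" where
  "sorts_to d x y \<longleftrightarrow>
     (\<exists>\<sigma>. bij_betw \<sigma> {..<d} {..<d} \<and> (\<forall>i<d. y i = x (\<sigma> i))) \<and>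
     (\<forall>i j. i \<le> j \<and> j < d \<longrightarrow> y i \<le> y j)"

definition linf :: "nat \<Rightarrow> (nat \<Rightarrow> real) \<Rightarrow> real" where
  "linf d x = Max ((\<lambda>i. \<bar>x i\<bar>) ` {..<d})"

end

theory Submission
  imports Defs
begin

lemma sum_mult_split: "(\<Sum>n<(a::nat)*b. f n) = (\<Sum>q<a. \<Sum>r<b. f (q*b + r)::'a::comm_monoid_add)"
proof (induction a)
  case 0 then show ?case by simp
next
  case (Suc a)
  have "(\<Sum>n<Suc a*b. f n) = (\<Sum>n<a*b. f n) + (\<Sum>n\<in>{a*b..<a*b+b}. f n)"
    by (simp add: add.commute sum.atLeastLessThan_concat flip: atLeast0LessThan)
  also have "(\<Sum>n\<in>{a*b..<a*b+b}. f n) = (\<Sum>r<b. f (a*b + r))"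
    using sum.shift_bounds_nat_ivl[of f 0 "a*b" b] by (simp add: atLeast0LessThan add.commute)
  finally show ?case using Suc by simp
qed

lemma sum_split3: "(\<Sum>n<d*d*4. f n) = (\<Sum>j<d. \<Sum>k<d. \<Sum>c<4. f ((j*d+k)*4+c)::'a::comm_monoid_add)" for d :: nat
  by (simp add: sum_mult_split)

lemma dec:
  assumes "k < d" "c < (4::nat)"
  shows "((j*d+k)*4+c) div 4 div d = j" "((j*d+k)*4+c) div 4 mod d = k" "((j*d+k)*4+c) mod 4 = c"
proof -
  have a: "((j*d+k)*4+c) div 4 = j*d+k" using assms(2) by simp
  have m: "((j*d+k)*4+c) mod 4 = c" using assms(2) by (metis mod_less mod_mult_self3 add.commute)
  have b: "(j*d+k) div d = j" "(j*d+k) mod d = k" using assms(1) by simp_all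
  show "((j*d+k)*4+c) div 4 div d = j" "((j*d+k)*4+c) div 4 mod d = k" "((j*d+k)*4+c) mod 4 = c"
    using a b m by simp_all
qed

lemma ifz: "(if P then a else 0) * b = (if P then a * b else (0::real))" by simp

lemma sum4: "(\<Sum>c<(4::nat). f c) = f 0 + f 1 + f 2 + (f 3 :: 'a::comm_monoid_add)"
  by (simp add: numeral_eq_Suc add.assoc)

definition W1s :: "nat \<Rightarrow> real \<Rightarrow> nat \<Rightarrow> nat \<Rightarrow> real" where
 "W1s d \<delta> n l = (let j = n div 4 div d; k = n div 4 mod d; c = n mod 4 in
    if c < 2 then (if l = j then 1/\<delta> else 0) - (if l = k then 1/\<delta> else 0)
    else if c = 2 then (if l = j then 1 else 0) else (if l = j then -1 else 0))"
definition b1s :: "nat \<Rightarrow> real" where "b1s n = (if n mod 4 = 1 then -1 else 0)"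
definition W2s :: "nat \<Rightarrow> nat \<Rightarrow> nat \<Rightarrow> real" where
 "W2s d m n = (let j = m div 4 mod d; c = m mod 4; j' = n div 4 div d; k = n div 4 mod d; c' = n mod 4 in
   if j' \<noteq> j then 0 else if c' = 0 then 1 else if c' = 1 then -1 else if k \<noteq> 0 then 0
   else if c = 0 then (if c' = 2 then 1 else -1) else if c = 1 then (if c' = 2 then -1 else 1) else 0)"
definition b2s :: "nat \<Rightarrow> nat \<Rightarrow> real" where "b2s d m = - real (m div 4 div d)"
definition W3s :: "nat \<Rightarrow> nat \<Rightarrow> nat \<Rightarrow> real" where
  "W3s d i m = (if m div 4 div d = i then (if m mod 4 < 2 then 1 else -1) else 0)"

lemma aff1:
  assumes "j < d" "k < d" "c < 4"
  shows "affine d (W1s d \<delta>) b1s x ((j*d+k)*4+c) =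
    (if c = 0 then (x j - x k)/\<delta> else if c = 1 then (x j - x k)/\<delta> - 1 else if c = 2 then x j else - x j)"
proof -
  have W: "W1s d \<delta> ((j*d+k)*4+c) l = (if c < 2 then (if l = j then 1/\<delta> else 0) - (if l = k then 1/\<delta> else 0)
    else if c = 2 then (if l = j then 1 else 0) else (if l = j then -1 else 0))" for l
    unfolding W1s_def Let_def dec[OF assms(2,3)] ..
  have s1: "(\<Sum>l<d. ((if l = j then 1/\<delta> else 0) - (if l = k then 1/\<delta> else 0)) * x l) = (x j - x k)/\<delta>"
    using assms by (simp add: left_diff_distrib sum_subtractf diff_divide_distrib ifz)
  have s2: "(\<Sum>l<d. (if l = j then 1 else 0) * x l) = x j"
    using assms by (simp add: ifz)
  have s3: "(\<Sum>l<d. (if l = j then -1 else 0) * x l) = - x j"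
    using assms by (simp add: ifz)
  have A: "affine d (W1s d \<delta>) b1s x ((j*d+k)*4+c) = (\<Sum>l<d. W1s d \<delta> ((j*d+k)*4+c) l * x l) + b1s ((j*d+k)*4+c)"
    by (simp add: affine_def)
  have B: "b1s ((j*d+k)*4+c) = (if c = 1 then -1 else 0)" unfolding b1s_def dec[OF assms(2,3)] ..
  show ?thesis
  proof (cases "c < 2")
    case True
    then show ?thesis unfolding A B W using s1 by auto
  next
    case False
    then show ?thesis unfolding A B W using s2 s3 by auto
  qed
qed

lemma sum_only:
  assumes "j < (d::nat)" "\<And>j'. j' < d \<Longrightarrow> j' \<noteq> j \<Longrightarrow> G j' = 0"
  shows "(\<Sum>j'<d. G j') = (G j :: real)"
proof -
  have "(\<Sum>j'<d. G j') = (\<Sum>j'<d. if j' = j then G j else 0)"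
    using assms(2) by (intro sum.cong) auto
  also have "\<dots> = G j" using assms(1) by simp
  finally show ?thesis .
qed

lemma out3:
  assumes "i < d"
  shows "affine (d*d*4) (W3s d) (\<lambda>_. 0) h i =
    (\<Sum>j<d. h ((i*d+j)*4) + h ((i*d+j)*4+1) - h ((i*d+j)*4+2) - h ((i*d+j)*4+3))"
proof -
  have W: "W3s d i ((i'*d+j)*4+c) = (if i' = i then (if c < 2 then 1 else -1) else 0)"
    if "j < d" "c < 4" for i' j c
    unfolding W3s_def dec[OF that] ..
  have "affine (d*d*4) (W3s d) (\<lambda>_. 0) h i = (\<Sum>i'<d. \<Sum>j<d. \<Sum>c<4. W3s d i ((i'*d+j)*4+c) * h ((i'*d+j)*4+c))"
    by (simp add: affine_def sum_split3)
  also have "\<dots> = (\<Sum>i'<d. \<Sum>j<d. \<Sum>c<4. (if i' = i then (if c < 2 then 1 else -1) else 0) * h ((i'*d+j)*4+c))"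
    by (intro sum.cong refl) (simp only: lessThan_iff W)
  also have "\<dots> = (\<Sum>j<d. \<Sum>c<4. (if c < 2 then 1 else -1) * h ((i*d+j)*4+c))"
    using sum_only[OF assms, of "\<lambda>i'. \<Sum>j<d. \<Sum>c<4. (if i' = i then (if c < 2 then 1 else -1) else 0) * h ((i'*d+j)*4+c)"] by simp
  also have "\<dots> = (\<Sum>j<d. h ((i*d+j)*4) + h ((i*d+j)*4+1) - h ((i*d+j)*4+2) - h ((i*d+j)*4+3))"
    by (simp add: sum4)
  finally show ?thesis .
qed

lemma aff2:
  assumes "i < d" "j < d" "c < 4"
  shows "affine (d*d*4) (W2s d) (b2s d) h ((i*d+j)*4+c) =
    (\<Sum>k<d. h ((j*d+k)*4) - h ((j*d+k)*4+1)) - real i +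
    (if c = 0 then h ((j*d)*4+2) - h ((j*d)*4+3) else if c = 1 then h ((j*d)*4+3) - h ((j*d)*4+2) else 0)"
proof -
  define S :: "nat \<Rightarrow> real" where "S c' = (if c = 0 then (if c' = 2 then 1 else -1) else if c = 1 then (if c' = 2 then -1 else 1) else 0)" for c'
  have W: "W2s d ((i*d+j)*4+c) ((j'*d+k)*4+c') = (if j' \<noteq> j then 0 else if c' = 0 then 1 else if c' = 1 then -1 else if k \<noteq> 0 then 0 else S c')"
    if "k < d" "c' < 4" for j' k c'
    unfolding W2s_def dec[OF that] dec[OF assms(2,3)] Let_def S_def ..
  have b: "b2s d ((i*d+j)*4+c) = - real i" unfolding b2s_def dec[OF assms(2,3)] ..
  have "affine (d*d*4) (W2s d) (b2s d) h ((i*d+j)*4+c) = (\<Sum>j'<d. \<Sum>k<d. \<Sum>c'<4. W2s d ((i*d+j)*4+c) ((j'*d+k)*4+c') * h ((j'*d+k)*4+c')) - real i"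
    unfolding affine_def b sum_split3 by simp
  also have "(\<Sum>j'<d. \<Sum>k<d. \<Sum>c'<4. W2s d ((i*d+j)*4+c) ((j'*d+k)*4+c') * h ((j'*d+k)*4+c')) =
     (\<Sum>j'<d. \<Sum>k<d. \<Sum>c'<4. (if j' \<noteq> j then 0 else if c' = 0 then 1 else if c' = 1 then -1 else if k \<noteq> 0 then 0 else S c') * h ((j'*d+k)*4+c'))"
    by (intro sum.cong refl) (simp only: lessThan_iff W)
  also have "\<dots> = (\<Sum>k<d. \<Sum>c'<4. (if c' = 0 then 1 else if c' = 1 then -1 else if k \<noteq> 0 then 0 else S c') * h ((j*d+k)*4+c'))"
    using sum_only[OF assms(2), of "\<lambda>j'. \<Sum>k<d. \<Sum>c'<4. (if j' \<noteq> j then 0 else if c' = 0 then 1 else if c' = 1 then -1 else if k \<noteq> 0 then 0 else S c') * h ((j'*d+k)*4+c')"] by simp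
  also have "\<dots> = (\<Sum>k<d. (h ((j*d+k)*4) - h ((j*d+k)*4+1)) + (if k = 0 then S 2 * h ((j*d+k)*4+2) + S 3 * h ((j*d+k)*4+3) else 0))"
    by (intro sum.cong refl) (simp add: sum4)
  also have "\<dots> = (\<Sum>k<d. h ((j*d+k)*4) - h ((j*d+k)*4+1)) + (S 2 * h ((j*d)*4+2) + S 3 * h ((j*d)*4+3))"
    using assms by (simp add: sum.distrib)
  finally show ?thesis by (simp add: S_def)
qed

definition hat :: "real \<Rightarrow> real \<Rightarrow> real" where
  "hat t y = relu (t + y) + relu (t - y) - relu t - relu t"

definition Tf :: "nat \<Rightarrow> real \<Rightarrow> (nat \<Rightarrow> real) \<Rightarrow> nat \<Rightarrow> nat \<Rightarrow> real" where
  "Tf d \<delta> x i j = (\<Sum>k<d. relu ((x j - x k)/\<delta>) - relu ((x j - x k)/\<delta> - 1)) - real i"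

lemma relu_pm: "relu y - relu (- y) = y" by (simp add: relu_def)

lemma net_formula:
  assumes "0 < d" "i < d"
  shows "relu_net2 d (d*d*4) (d*d*4) (W1s d \<delta>) b1s (W2s d) (b2s d) (W3s d) (\<lambda>_. 0) x i =
    (\<Sum>j<d. hat (Tf d \<delta> x i j) (x j))"
proof -
  define h1 where "h1 = relu_layer d (W1s d \<delta>) b1s x"
  define h2 where "h2 = relu_layer (d*d*4) (W2s d) (b2s d) h1"
  have H1: "h1 ((j*d+k)*4) = relu ((x j - x k)/\<delta>)" "h1 ((j*d+k)*4+1) = relu ((x j - x k)/\<delta> - 1)"
     "h1 ((j*d+k)*4+2) = relu (x j)" "h1 ((j*d+k)*4+3) = relu (- x j)" if "j < d" "k < d" for j k
    using aff1[OF that, of 0 \<delta> x] aff1[OF that, of 1 \<delta> x] aff1[OF that, of 2 \<delta> x] aff1[OF that, of 3 \<delta> x]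
    by (simp_all add: h1_def relu_layer_def)
  have X: "h1 ((j*d)*4+2) - h1 ((j*d)*4+3) = x j" if "j < d" for j
    using H1(3,4)[OF that assms(1)] relu_pm by simp
  have T: "(\<Sum>k<d. h1 ((j*d+k)*4) - h1 ((j*d+k)*4+1)) - real i = Tf d \<delta> x i j" if "j < d" for j
    unfolding Tf_def using H1(1,2)[OF that] by (intro arg_cong2[where f = minus] sum.cong refl) auto
  have H2: "h2 ((i*d+j)*4+c) = relu (Tf d \<delta> x i j + (if c = 0 then x j else if c = 1 then - x j else 0))"
    if "j < d" "c < 4" for j c
  proof -
    have "h2 ((i*d+j)*4+c) = relu (affine (d*d*4) (W2s d) (b2s d) h1 ((i*d+j)*4+c))"
      by (simp add: h2_def relu_layer_def)
    also have "\<dots> = relu (Tf d \<delta> x i j + (if c = 0 then x j else if c = 1 then - x j else 0))"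
      unfolding aff2[OF assms(2) that] T[OF that(1), symmetric] using X[OF that(1)] by (simp add: algebra_simps)
    finally show ?thesis .
  qed
  have "relu_net2 d (d*d*4) (d*d*4) (W1s d \<delta>) b1s (W2s d) (b2s d) (W3s d) (\<lambda>_. 0) x i =
    affine (d*d*4) (W3s d) (\<lambda>_. 0) h2 i"
    by (simp add: relu_net2_def h1_def h2_def)
  also have "\<dots> = (\<Sum>j<d. h2 ((i*d+j)*4) + h2 ((i*d+j)*4+1) - h2 ((i*d+j)*4+2) - h2 ((i*d+j)*4+3))"
    by (rule out3[OF assms(2)])
  also have "\<dots> = (\<Sum>j<d. hat (Tf d \<delta> x i j) (x j))"
  proof (intro sum.cong refl)
    fix j assume "j \<in> {..<d}"
    then have j: "j < d" by simp
    show "h2 ((i*d+j)*4) + h2 ((i*d+j)*4+1) - h2 ((i*d+j)*4+2) - h2 ((i*d+j)*4+3) = hat (Tf d \<delta> x i j) (x j)"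
      using H2[OF j, of 0] H2[OF j, of 1] H2[OF j, of 2] H2[OF j, of 3] by (simp add: hat_def)
  qed
  finally show ?thesis .
qed

lemma hat_bound: "\<bar>hat t y\<bar> \<le> \<bar>y\<bar>"
  by (simp add: hat_def relu_def)

lemma hat_int:
  assumes "0 < y" "y < 1"
  shows "hat (real_of_int m) y = (if m = 0 then y else 0)"
proof -
  have "m = 0 \<or> m \<ge> 1 \<or> m \<le> -1" by linarith
  then show ?thesis
  proof (elim disjE)
    assume "m \<ge> 1" then have "real_of_int m \<ge> 1" by simp
    then show ?thesis using assms by (auto simp: hat_def relu_def)
  next
    assume "m \<le> -1" then have "real_of_int m \<le> -1" by simp
    then show ?thesis using assms by (auto simp: hat_def relu_def)
  qed (use assms in \<open>simp add: hat_def relu_def\<close>)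
qed

definition rk :: "nat \<Rightarrow> (nat \<Rightarrow> real) \<Rightarrow> nat \<Rightarrow> nat" where
  "rk d x j = card {k\<in>{..<d}. x k < x j}"

lemma rk_less:
  assumes "j < d" "k < d" "x k < x j"
  shows "rk d x k < rk d x j"
proof -
  have "{l\<in>{..<d}. x l < x k} \<subset> {l\<in>{..<d}. x l < x j}"
    using assms by auto
  then show ?thesis unfolding rk_def by (intro psubset_card_mono) auto
qed

lemma rk_lt_d:
  assumes "j < d"
  shows "rk d x j < d"
proof -
  have "{k\<in>{..<d}. x k < x j} \<subseteq> {..<d} - {j}" by auto
  then have "rk d x j \<le> card ({..<d} - {j})" unfolding rk_def by (intro card_mono) auto
  also have "\<dots> = d - 1" using assms by simp
  finally show ?thesis using assms by simp
qed

lemma rk_bij: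
  assumes "inj_on x {..<d}"
  shows "bij_betw (rk d x) {..<d} {..<d}"
proof -
  have inj: "inj_on (rk d x) {..<d}"
  proof (rule inj_onI)
    fix j k assume j: "j \<in> {..<d}" and k: "k \<in> {..<d}" and e: "rk d x j = rk d x k"
    show "j = k"
    proof (rule ccontr)
      assume "j \<noteq> k"
      then have "x j \<noteq> x k" using assms j k by (auto dest: inj_onD)
      then have "x j < x k \<or> x k < x j" by linarith
      then show False using rk_less[of j d k x] rk_less[of k d j x] j k e by auto
    qed
  qed
  have sub: "rk d x ` {..<d} \<subseteq> {..<d}" using rk_lt_d by auto
  have "card (rk d x ` {..<d}) = card {..<d}" using card_image[OF inj] by simp
  then have "rk d x ` {..<d} = {..<d}" using sub by (intro card_subset_eq) auto
  then show ?thesis using inj unfolding bij_betw_def by simp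
qed

lemma rk_less_rev:
  assumes "j < d" "k < d" "rk d x k < rk d x j"
  shows "x k < x j"
proof (rule ccontr)
  assume "\<not> x k < x j"
  then have "x j < x k \<or> x j = x k" by linarith
  then show False
  proof
    assume "x j < x k" then show False using rk_less[of k d j x] assms by simp
  next
    assume "x j = x k" then have "rk d x j = rk d x k" by (simp add: rk_def)
    then show False using assms by simp
  qed
qed

lemma S_inj:
  assumes "in_S d \<delta> x" "\<forall>i<d. x i \<noteq> 0" "\<delta> > 0"
  shows "inj_on x {..<d}"
proof (rule inj_onI)
  fix j k assume "j \<in> {..<d}" "k \<in> {..<d}" "x j = x k"
  then show "j = k" using assms unfolding in_S_def by force
qed

lemma S_lower:
  assumes "in_S d \<delta> x" "\<forall>i<d. x i \<noteq> 0" "\<delta> > 0"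
  shows "\<forall>j<d. rk d x j = n \<longrightarrow> x j \<ge> \<delta> * (real n + 1)"
proof (induction n)
  case 0
  then show ?case using assms unfolding in_S_def by auto
next
  case (Suc n)
  show ?case
  proof (intro allI impI)
    fix j assume j: "j < d" and r: "rk d x j = Suc n"
    have bij: "bij_betw (rk d x) {..<d} {..<d}" using rk_bij[OF S_inj[OF assms]] .
    have "n < d" using rk_lt_d[OF j, of x] r by simp
    then obtain k where k: "k < d" "rk d x k = n"
      using bij unfolding bij_betw_def by (metis imageE lessThan_iff)
    have lt: "x k < x j" using rk_less_rev[OF j k(1)] k r by simp
    then have "j \<noteq> k" by auto
    then have "\<delta> \<le> \<bar>x j - x k\<bar>" using assms j k unfolding in_S_def by auto
    then have "x j \<ge> x k + \<delta>" using lt by simp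
    moreover have "x k \<ge> \<delta> * (real n + 1)" using Suc k by simp
    ultimately show "x j \<ge> \<delta> * (real (Suc n) + 1)" by (simp add: algebra_simps)
  qed
qed

lemma S_small:
  assumes "in_S d \<delta> x" "\<forall>i<d. x i \<noteq> 0" "\<delta> > 0" "d > 0"
  shows "real (d + 1) * \<delta> \<le> 1"
proof -
  have bij: "bij_betw (rk d x) {..<d} {..<d}" using rk_bij[OF S_inj[OF assms(1-3)]] .
  have "d - 1 < d" using assms by simp
  then obtain j where j: "j < d" "rk d x j = d - 1"
    using bij unfolding bij_betw_def by (metis imageE lessThan_iff)
  have "x j \<ge> \<delta> * (real (d - 1) + 1)" using S_lower[OF assms(1-3)] j by blast
  moreover have "x j \<le> 1 - \<delta>" using assms j unfolding in_S_def by auto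
  moreover have "real (d - 1) + 1 = real d" using assms by simp
  ultimately show ?thesis by (simp add: algebra_simps)
qed

lemma linf_ge: "i < d \<Longrightarrow> \<bar>x i\<bar> \<le> linf d x"
  unfolding linf_def by (intro Max_ge) auto

lemma ind_S:
  assumes "in_S d \<delta> x" "\<forall>i<d. x i \<noteq> 0" "\<delta> > 0" "j < d" "k < d"
  shows "relu ((x j - x k)/\<delta>) - relu ((x j - x k)/\<delta> - 1) = (if x k < x j then 1 else 0)"
proof -
  consider "x k < x j" | "x j < x k" | "x j = x k" by linarith
  then show ?thesis
  proof cases
    case 1
    then have "j \<noteq> k" by auto
    then have "\<delta> \<le> \<bar>x j - x k\<bar>" using assms unfolding in_S_def by auto
    then have "(x j - x k)/\<delta> \<ge> 1" using 1 assms(3) by (simp add: field_simps)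
    then show ?thesis using 1 by (simp add: relu_def)
  next
    case 2
    then have "j \<noteq> k" by auto
    then have "\<delta> \<le> \<bar>x j - x k\<bar>" using assms unfolding in_S_def by auto
    then have "(x j - x k)/\<delta> \<le> -1" using 2 assms(3) by (simp add: field_simps)
    then show ?thesis using 2 by (simp add: relu_def)
  next
    case 3 then show ?thesis by (simp add: relu_def)
  qed
qed

lemma Tf_S:
  assumes "in_S d \<delta> x" "\<forall>i<d. x i \<noteq> 0" "\<delta> > 0" "j < d"
  shows "Tf d \<delta> x i j = real_of_int (int (rk d x j) - int i)"
proof -
  have "(\<Sum>k<d. relu ((x j - x k)/\<delta>) - relu ((x j - x k)/\<delta> - 1)) = (\<Sum>k<d. if x k < x j then 1 else 0)"
    using ind_S[OF assms] by (intro sum.cong) auto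
  also have "\<dots> = real (rk d x j)"
    unfolding rk_def by (simp add: sum.inter_filter[symmetric])
  finally show ?thesis unfolding Tf_def by simp
qed

theorem propositionB1:
  fixes d :: nat and \<delta> :: real
  assumes "d > 0" and "\<delta> > 0"
  shows "\<exists>n1 n2 W1 b1 W2 b2 W3 b3.
           max n1 n2 = 4 * d^2 \<and>
           params_bounded (1 / \<delta>) d n1 n2 d W1 b1 W2 b2 W3 b3 \<and>
           (\<forall>x. in_S d \<delta> x \<and> (\<forall>i<d. x i \<noteq> 0) \<longrightarrow>
                sorts_to d x (relu_net2 d n1 n2 W1 b1 W2 b2 W3 b3 x)) \<and>
           (\<forall>x i. i < d \<longrightarrow>
                \<bar>relu_net2 d n1 n2 W1 b1 W2 b2 W3 b3 x i\<bar> \<le> real d * linf d x)"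
proof (cases "real (d + 1) * \<delta> \<le> 1")
  case False
  define Z2 :: "nat \<Rightarrow> nat \<Rightarrow> real" where "Z2 = (\<lambda>_ _. 0)"
  define Z1 :: "nat \<Rightarrow> real" where "Z1 = (\<lambda>_. 0)"
  have net0: "relu_net2 d (d*d*4) (d*d*4) Z2 Z1 Z2 Z1 Z2 Z1 x i = 0" for x i
    by (simp add: relu_net2_def affine_def Z2_def Z1_def)
  have pb: "params_bounded (1 / \<delta>) d (d*d*4) (d*d*4) d Z2 Z1 Z2 Z1 Z2 Z1"
    using assms by (simp add: params_bounded_def Z2_def Z1_def)
  have lin: "0 \<le> real d * linf d x" for x
    using linf_ge[OF assms(1), of x] by simp
  show ?thesis
    apply (rule exI[of _ "d*d*4"], rule exI[of _ "d*d*4"])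
    apply (rule exI[of _ Z2], rule exI[of _ Z1], rule exI[of _ Z2], rule exI[of _ Z1], rule exI[of _ Z2], rule exI[of _ Z1])
    using pb lin net0 S_small[OF _ _ assms(2,1)] False by (auto simp: power2_eq_square)
next
  case True
  have dinv: "real (d + 1) \<le> 1 / \<delta>" using True assms(2) by (simp add: field_simps)
  have one: "1 \<le> 1 / \<delta>" using dinv by simp
  have pb: "params_bounded (1 / \<delta>) d (d*d*4) (d*d*4) d (W1s d \<delta>) b1s (W2s d) (b2s d) (W3s d) (\<lambda>_. 0)"
    unfolding params_bounded_def
  proof (intro conjI allI impI)
    fix i j
    show "\<bar>W1s d \<delta> i j\<bar> \<le> 1 / \<delta>" using one assms(2) by (auto simp: W1s_def Let_def)
  next
    fix i show "\<bar>b1s i\<bar> \<le> 1 / \<delta>" using one assms(2) by (simp add: b1s_def)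
  next
    fix i j show "\<bar>W2s d i j\<bar> \<le> 1 / \<delta>" using one assms(2) by (simp add: W2s_def Let_def)
  next
    fix i assume i: "i < d*d*4"
    then have "i div 4 < d * d" by simp
    then have "i div 4 div d < d" by (simp add: less_mult_imp_div_less)
    then have "real (i div 4 div d) \<le> real (d + 1)" by simp
    then show "\<bar>b2s d i\<bar> \<le> 1 / \<delta>" using dinv by (simp add: b2s_def)
  next
    fix i j show "\<bar>W3s d i j\<bar> \<le> 1 / \<delta>" using one assms(2) by (simp add: W3s_def)
  next
    fix i show "\<bar>(\<lambda>_. 0::real) i\<bar> \<le> 1 / \<delta>" using one assms(2) by simp
  qed
  have bnd: "\<bar>relu_net2 d (d*d*4) (d*d*4) (W1s d \<delta>) b1s (W2s d) (b2s d) (W3s d) (\<lambda>_. 0) x i\<bar> \<le> real d * linf d x"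
    if "i < d" for x i
  proof -
    have "\<bar>\<Sum>j<d. hat (Tf d \<delta> x i j) (x j)\<bar> \<le> (\<Sum>j<d. \<bar>hat (Tf d \<delta> x i j) (x j)\<bar>)"
      by (rule sum_abs)
    also have "\<dots> \<le> (\<Sum>j<d. linf d x)"
      by (intro sum_mono order.trans[OF hat_bound linf_ge]) auto
    finally show ?thesis using net_formula[OF assms(1) that] by simp
  qed
  have srt: "sorts_to d x (relu_net2 d (d*d*4) (d*d*4) (W1s d \<delta>) b1s (W2s d) (b2s d) (W3s d) (\<lambda>_. 0) x)"
    if S: "in_S d \<delta> x" and nz: "\<forall>i<d. x i \<noteq> 0" for x
  proof -
    have bij: "bij_betw (rk d x) {..<d} {..<d}" using rk_bij[OF S_inj[OF S nz assms(2)]] .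
    define \<sigma> where "\<sigma> = the_inv_into {..<d} (rk d x)"
    have bs: "bij_betw \<sigma> {..<d} {..<d}" unfolding \<sigma>_def by (rule bij_betw_the_inv_into[OF bij])
    have rs: "rk d x (\<sigma> i) = i" if "i < d" for i
      unfolding \<sigma>_def using that bij by (simp add: f_the_inv_into_f_bij_betw)
    have sr: "\<sigma> (rk d x j) = j" if "j < d" for j
      unfolding \<sigma>_def using that bij by (simp add: bij_betw_def the_inv_into_f_f)
    have si: "\<sigma> i < d" if "i < d" for i using bs that by (auto simp: bij_betw_def)
    have val: "relu_net2 d (d*d*4) (d*d*4) (W1s d \<delta>) b1s (W2s d) (b2s d) (W3s d) (\<lambda>_. 0) x i = x (\<sigma> i)"
      if i: "i < d" for i
    proof -
      have "(\<Sum>j<d. hat (Tf d \<delta> x i j) (x j)) = (\<Sum>j<d. if j = \<sigma> i then x j else 0)"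
      proof (intro sum.cong refl)
        fix j assume "j \<in> {..<d}"
        then have j: "j < d" by simp
        have pos: "0 < x j" "x j < 1" using S nz j assms(2) unfolding in_S_def by (auto intro: less_le_trans)
        have "(int (rk d x j) - int i = 0) = (j = \<sigma> i)" using rs[OF i] sr[OF j] by auto
        then show "hat (Tf d \<delta> x i j) (x j) = (if j = \<sigma> i then x j else 0)"
          unfolding Tf_S[OF S nz assms(2) j] hat_int[OF pos] by simp
      qed
      also have "\<dots> = x (\<sigma> i)" using si[OF i] by simp
      finally show ?thesis using net_formula[OF assms(1) i] by simp
    qed
    show ?thesis
      unfolding sorts_to_def
    proof (intro conjI exI[of _ \<sigma>] allI impI)
      show "bij_betw \<sigma> {..<d} {..<d}" by (rule bs)
    next
      fix i assume "i < d" then show "relu_net2 d (d*d*4) (d*d*4) (W1s d \<delta>) b1s (W2s d) (b2s d) (W3s d) (\<lambda>_. 0) x i = x (\<sigma> i)"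
        by (rule val)
    next
      fix i j assume ij: "i \<le> j \<and> j < d"
      then have i: "i < d" by simp
      have "x (\<sigma> i) \<le> x (\<sigma> j)"
      proof (rule ccontr)
        assume "\<not> x (\<sigma> i) \<le> x (\<sigma> j)"
        then have "rk d x (\<sigma> j) < rk d x (\<sigma> i)" using rk_less[OF si[OF i] si] ij by simp
        then show False using rs i ij by simp
      qed
      then show "relu_net2 d (d*d*4) (d*d*4) (W1s d \<delta>) b1s (W2s d) (b2s d) (W3s d) (\<lambda>_. 0) x i \<le>
                 relu_net2 d (d*d*4) (d*d*4) (W1s d \<delta>) b1s (W2s d) (b2s d) (W3s d) (\<lambda>_. 0) x j"
        using val i ij by simp
    qed
  qed
  show ?thesis
    apply (rule exI[of _ "d*d*4"], rule exI[of _ "d*d*4"])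
    apply (rule exI[of _ "W1s d \<delta>"], rule exI[of _ b1s], rule exI[of _ "W2s d"], rule exI[of _ "b2s d"], rule exI[of _ "W3s d"], rule exI[of _ "\<lambda>_. 0"])
    using pb bnd srt by (auto simp: power2_eq_square)
qed

end
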